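(* Fix $1\le s\le d$ with $d/s$ an integer, and $T$ such that $T/2$, $Ts/(2d)$ and $T/(2s)$ are integers. Let $(f,O)\in\mathcal{O}_{\mathtt{blsp},s}$, so $f(x)=\|x-v\|_2^2$ for an $s$-block sparse $v$ and $O$ is built from a random $X\in\{-1,1\}^d$ with independent coordinates and $\mathbb{E}[X]=v$. Consider the following adaptive coordinate descent procedure using $T$ oracle queries, each of whose gradient estimates is observed only through one coordinate (i.e. through an oblivious sampling channel that deterministically selects a coordinate, chosen adaptively): Exploration phase (first $T/2$ queries): for each block $k\in[d/s]$, query the oracle $Ts/(2d)$ times and observe coordinate $(k-1)s+1$ of the gradient estimate, recovering from it the value $X_t((k-1)s+1)$ (possible since the query point is known); set $\hat X(k)$ to be the sum of these $Ts/(2d)$ recovered values. Let $k^*=\arg\max_{k\in[d/s]}|\hat X(k)|$ and $\mathcal{I}=\{(k^*-1)s+1,\dots,k^*s\}$. Exploitation phase (last $T/2$ queries): for each $j\in\mathcal{I}$, query the oracle $T/(2s)$ fresh times observing coordinate $j$, recover the values $X_t(j)$, and set $\hat Y(j)=\frac{2s}{T}\sum X_t(j)$ over these queries; set $\hat Y(j)=0$ for $j\notin\mathcal{I}$. Then the output $\hat Y=(\hat Y(1),\dots,\hat Y(d))$ satisfies \[ \mathbb{E}[f(\hat Y)]\ \le\ \frac{36\,d\ln\frac ds+2s^2}{T}. \]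
   Context: Partition $[d]$ into blocks $\{(k-1)s+1,\dots,ks\}$, $k\in[d/s]$. A vector $v\in\mathbb{R}^d$ is $s$-block sparse if it vanishes outside a single block and all coordinates in that block have the same absolute value, lying in $[0,1]$. $\mathcal{O}_{\mathtt{blsp},s}$ is the set of pairs $(f_v,O_v)$, $v$ $s$-block sparse, where $f_v(x)=\|x-v\|_2^2$ on $\mathcal{X}=[-1,1]^d$ and $O_v$, on query $x$ at time $t$, outputs $2(x-X_t)$, where $X_1,X_2,\dots$ are i.i.d. copies of a random vector $X\in\{-1,1\}^d$ with independent coordinates and $\mathbb{E}[X]=v$. *)

theory Defs
  imports "HOL-Probability.Probability"
begin

text \<open>Coordinates are 0-based: [d] is {0 ..< d}; block k (k < d div s) is {k * s ..< (k+1) * s}.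
  Vectors in R^d are functions nat => real (only coordinates < d matter).\<close>

definition blk :: "nat \<Rightarrow> nat \<Rightarrow> nat set" where
  "blk sz b = {b * sz ..< (b+1) * sz}"

definition block_sparse :: "nat \<Rightarrow> nat \<Rightarrow> (nat \<Rightarrow> real) \<Rightarrow> bool" where
  "block_sparse d s v \<longleftrightarrow>
     (\<exists>k < d div s. \<exists>c::real. 0 \<le> c \<and> c \<le> 1 \<and>
        (\<forall>i. (i \<in> blk s k \<longrightarrow> \<bar>v i\<bar> = c) \<and> (i \<notin> blk s k \<longrightarrow> v i = 0)))"

definition fobj :: "nat \<Rightarrow> (nat \<Rightarrow> real) \<Rightarrow> (nat \<Rightarrow> real) \<Rightarrow> real" where
  "fobj d v x = (\<Sum>i<d. (x i - v i)^2)"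

text \<open>Distribution of the noise: Z(t,i) = X_t(i), all independent, X_t(i) in {-1,1}
  with mean v i (i.e. P(X_t(i)=1) = (1 + v i)/2), for t < T, i < d.\<close>
definition coord_pmf :: "real \<Rightarrow> real pmf" where
  "coord_pmf a = map_pmf (\<lambda>b. if b then 1 else -1) (bernoulli_pmf ((1 + a) / 2))"

definition sample_pmf :: "nat \<Rightarrow> nat \<Rightarrow> (nat \<Rightarrow> real) \<Rightarrow> (nat \<times> nat \<Rightarrow> real) pmf" where
  "sample_pmf d T v = Pi_pmf ({..<T} \<times> {..<d}) 0 (\<lambda>(t,i). coord_pmf (v i))"

text \<open>Oracle O_v at time t on query x: gradient estimate 2(x - X_t); coordinate j observed.\<close>
definition grad_obs :: "(nat \<Rightarrow> real) \<Rightarrow> (nat \<times> nat \<Rightarrow> real) \<Rightarrow> nat \<Rightarrow> nat \<Rightarrow> real" where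
  "grad_obs x Z t j = 2 * (x j - Z (t, j))"

definition recover :: "(nat \<Rightarrow> real) \<Rightarrow> real \<Rightarrow> nat \<Rightarrow> real" where
  "recover x g j = x j - g / 2"

text \<open>Query points q t Z (time t; may depend arbitrarily on the sample, in particular adaptively).\<close>
definition rec_val :: "(nat \<Rightarrow> (nat \<times> nat \<Rightarrow> real) \<Rightarrow> nat \<Rightarrow> real) \<Rightarrow> (nat \<times> nat \<Rightarrow> real) \<Rightarrow> nat \<Rightarrow> nat \<Rightarrow> real" where
  "rec_val q Z t j = recover (q t Z) (grad_obs (q t Z) Z t j) j"

definition Xhat :: "nat \<Rightarrow> nat \<Rightarrow> nat \<Rightarrow> (nat \<Rightarrow> (nat \<times> nat \<Rightarrow> real) \<Rightarrow> nat \<Rightarrow> real) \<Rightarrow> (nat \<times> nat \<Rightarrow> real) \<Rightarrow> nat \<Rightarrow> real" where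
  "Xhat d s T q Z k = (let m = T * s div (2 * d) in
      \<Sum>t\<in>{(k * m) ..< ((k+1) * m)}. rec_val q Z t (k * s))"

definition kstar :: "nat \<Rightarrow> nat \<Rightarrow> nat \<Rightarrow> (nat \<Rightarrow> (nat \<times> nat \<Rightarrow> real) \<Rightarrow> nat \<Rightarrow> real) \<Rightarrow> (nat \<times> nat \<Rightarrow> real) \<Rightarrow> nat" where
  "kstar d s T q Z = (LEAST k. k < d div s \<and>
      (\<forall>k'<d div s. \<bar>Xhat d s T q Z k'\<bar> \<le> \<bar>Xhat d s T q Z k\<bar>))"

definition Yhat :: "nat \<Rightarrow> nat \<Rightarrow> nat \<Rightarrow> (nat \<Rightarrow> (nat \<times> nat \<Rightarrow> real) \<Rightarrow> nat \<Rightarrow> real) \<Rightarrow> (nat \<times> nat \<Rightarrow> real) \<Rightarrow> nat \<Rightarrow> real" where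
  "Yhat d s T q Z j = (let k = kstar d s T q Z; n = T div (2 * s); r = j - k * s in
      if j \<in> blk s k then (2 * real s / real T) *
         (\<Sum>t\<in>{(T div 2 + r * n) ..< (T div 2 + (r+1) * n)}. rec_val q Z t j)
      else 0)"

end

theory Submission
  imports Defs
begin


lemma rec_val_eq[simp]: "rec_val q Z t j = Z (t,j)"
  unfolding rec_val_def recover_def grad_obs_def by (simp add: field_simps)

lemma set_coord: "set_pmf (coord_pmf a) \<subseteq> {-1,1}"
  unfolding coord_pmf_def by auto

lemma exp_coord:
  assumes "\<bar>a\<bar> \<le> 1"
  shows "measure_pmf.expectation (coord_pmf a) h = (1+a)/2 * h 1 + (1 - (1+a)/2) * h (-1)"
proof -
  have "0 \<le> (1+a)/2" "(1+a)/2 \<le> 1" using assms by auto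
  then show ?thesis unfolding coord_pmf_def by (simp add: mult.commute)
qed

lemma exp_coord_id: "\<bar>a\<bar> \<le> 1 \<Longrightarrow> measure_pmf.expectation (coord_pmf a) (\<lambda>x. x) = a"
  by (subst exp_coord) (auto simp: field_simps)

lemma exp_coord_sq: "\<bar>a\<bar> \<le> 1 \<Longrightarrow> measure_pmf.expectation (coord_pmf a) (\<lambda>x. (x - a)^2) = 1 - a^2"
  by (subst exp_coord) (auto simp: field_simps power2_eq_square)

lemma fin_Pi:
  assumes "finite I" "\<And>p. finite (set_pmf (P p))"
  shows "finite (set_pmf (Pi_pmf I dflt P))"
  using assms by (auto simp: set_Pi_pmf)

lemma fin_coordPi: "finite I \<Longrightarrow> finite (set_pmf (Pi_pmf I 0 (\<lambda>(t,i). coord_pmf (w i))))"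
  apply (rule fin_Pi, simp)
  subgoal for p using set_coord[of "w (snd p)"] by (cases p) (auto intro: finite_subset)
  done

lemma Pi_comp:
  fixes h :: "'a \<Rightarrow> real"
  assumes "finite I" "p \<in> I"
  shows "measure_pmf.expectation (Pi_pmf I dflt P) (\<lambda>g. h (g p)) = measure_pmf.expectation (P p) h"
proof -
  have "P p = map_pmf (\<lambda>f. f p) (Pi_pmf I dflt P)" using assms by (simp add: Pi_pmf_component)
  then have "measure_pmf.expectation (P p) h = measure_pmf.expectation (map_pmf (\<lambda>f. f p) (Pi_pmf I dflt P)) h" by simp
  also have "\<dots> = measure_pmf.expectation (Pi_pmf I dflt P) (\<lambda>g. h (g p))" by (rule integral_map_pmf)
  finally show ?thesis by simp
qed

lemma Pi_set:
  assumes "finite I" "g \<in> set_pmf (Pi_pmf I dflt P)" "p \<in> I"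
  shows "g p \<in> set_pmf (P p)"
  using assms by (auto simp: set_Pi_pmf PiE_dflt_def)

lemma indep_Pi_borel:
  assumes "finite I" "S \<subseteq> I"
  shows "prob_space.indep_vars (measure_pmf (Pi_pmf I dflt P)) (\<lambda>_. borel) (\<lambda>p g. Y p (g p) :: real) S"
proof -
  have "prob_space.indep_vars (measure_pmf (Pi_pmf I dflt P)) (\<lambda>_. count_space UNIV) (\<lambda>x f. f x) S"
    using prob_space.indep_vars_subset[OF measure_pmf.prob_space_axioms indep_vars_Pi_pmf[OF assms(1)] assms(2)] .
  then show ?thesis by (rule prob_space.indep_vars_compose2[OF measure_pmf.prob_space_axioms]) auto
qed

lemma cross:
  fixes P :: "'i \<Rightarrow> real pmf"
  assumes "finite I" "p1 \<in> I" "p2 \<in> I" "p1 \<noteq> p2" "finite (set_pmf (Pi_pmf I dflt P))"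
  shows "measure_pmf.expectation (Pi_pmf I dflt P) (\<lambda>g. (g p1 - a) * (g p2 - b)) =
         measure_pmf.expectation (Pi_pmf I dflt P) (\<lambda>g. g p1 - a) * measure_pmf.expectation (Pi_pmf I dflt P) (\<lambda>g. g p2 - b)"
proof -
  define Y where "Y p x = x - (if p = p1 then a else b)" for p x
  have ind: "prob_space.indep_vars (measure_pmf (Pi_pmf I dflt P)) (\<lambda>_. borel) (\<lambda>p g. Y p (g p)) {p1,p2}"
    by (rule indep_Pi_borel) (use assms in auto)
  have "measure_pmf.expectation (Pi_pmf I dflt P) (\<lambda>g. \<Prod>p\<in>{p1,p2}. Y p (g p)) = (\<Prod>p\<in>{p1,p2}. measure_pmf.expectation (Pi_pmf I dflt P) (\<lambda>g. Y p (g p)))"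
    by (rule prob_space.indep_vars_lebesgue_integral[OF measure_pmf.prob_space_axioms _ ind]) (auto intro: integrable_measure_pmf_finite assms)
  then show ?thesis using assms(4) by (simp add: Y_def)
qed

lemma var_sum:
  fixes P :: "'i \<Rightarrow> real pmf"
  assumes fI: "finite I" and SI: "S \<subseteq> I" and fs: "finite (set_pmf (Pi_pmf I dflt P))"
    and mu: "\<And>p. p \<in> S \<Longrightarrow> measure_pmf.expectation (Pi_pmf I dflt P) (\<lambda>g. g p) = \<mu> p"
  shows "measure_pmf.expectation (Pi_pmf I dflt P) (\<lambda>g. (\<Sum>p\<in>S. (g p - \<mu> p))^2)
       = (\<Sum>p\<in>S. measure_pmf.expectation (Pi_pmf I dflt P) (\<lambda>g. (g p - \<mu> p)^2))"
proof -
  let ?M = "Pi_pmf I dflt P"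
  have int: "integrable (measure_pmf ?M) f" for f :: "_ \<Rightarrow> real"
    by (rule integrable_measure_pmf_finite[OF fs])
  have fS: "finite S" using fI SI finite_subset by blast
  have z: "measure_pmf.expectation ?M (\<lambda>g. g p - \<mu> p) = 0" if "p \<in> S" for p
    using mu[OF that] by (subst Bochner_Integration.integral_diff) (auto intro: int)
  have "measure_pmf.expectation ?M (\<lambda>g. (\<Sum>p\<in>S. (g p - \<mu> p))^2)
      = measure_pmf.expectation ?M (\<lambda>g. \<Sum>p\<in>S. \<Sum>p'\<in>S. (g p - \<mu> p) * (g p' - \<mu> p'))"
    by (simp add: power2_eq_square sum_product)
  also have "\<dots> = (\<Sum>p\<in>S. \<Sum>p'\<in>S. measure_pmf.expectation ?M (\<lambda>g. (g p - \<mu> p) * (g p' - \<mu> p')))"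
    by (simp add: Bochner_Integration.integral_sum int)
  also have "\<dots> = (\<Sum>p\<in>S. \<Sum>p'\<in>S. if p' = p then measure_pmf.expectation ?M (\<lambda>g. (g p - \<mu> p)^2) else 0)"
  proof (intro sum.cong refl)
    fix p p' assume p: "p \<in> S" and p': "p' \<in> S"
    show "measure_pmf.expectation ?M (\<lambda>g. (g p - \<mu> p) * (g p' - \<mu> p')) =
      (if p' = p then measure_pmf.expectation ?M (\<lambda>g. (g p - \<mu> p)^2) else 0)"
    proof (cases "p' = p")
      case True then show ?thesis by (simp add: power2_eq_square)
    next
      case False
      have "measure_pmf.expectation ?M (\<lambda>g. (g p - \<mu> p) * (g p' - \<mu> p')) =
        measure_pmf.expectation ?M (\<lambda>g. g p - \<mu> p) * measure_pmf.expectation ?M (\<lambda>g. g p' - \<mu> p')"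
        by (rule cross) (use fI SI p p' False fs in auto)
      then show ?thesis using z[OF p] False by simp
    qed
  qed
  also have "\<dots> = (\<Sum>p\<in>S. measure_pmf.expectation ?M (\<lambda>g. (g p - \<mu> p)^2))"
    using fS by simp
  finally show ?thesis .
qed

lemma hoeff:
  fixes P :: "'i \<Rightarrow> real pmf"
  assumes fI: "finite I" and SI: "S \<subseteq> I" and ne: "S \<noteq> {}"
    and PS: "\<And>p. p \<in> S \<Longrightarrow> P p = coord_pmf w" and w: "\<bar>w\<bar> \<le> 1" and e: "eps \<ge> 0"
  shows "measure_pmf.prob (Pi_pmf I 0 P) {g. eps \<le> \<bar>(\<Sum>p\<in>S. g p) - real (card S) * w\<bar>}
           \<le> 2 * exp (- (eps^2) / (2 * real (card S)))"
proof -
  have fS: "finite S" using fI SI finite_subset by blast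
  have ex: "measure_pmf.expectation (Pi_pmf I 0 P) (\<lambda>g. g p) = w" if "p \<in> S" for p
  proof -
    have "measure_pmf.expectation (Pi_pmf I 0 P) (\<lambda>g. g p) = measure_pmf.expectation (P p) (\<lambda>x. x)"
      by (rule Pi_comp) (use fI SI that in auto)
    then show ?thesis using PS[OF that] exp_coord_id[OF w] by simp
  qed
  interpret H: Hoeffding_ineq "measure_pmf (Pi_pmf I 0 P)" S "\<lambda>p g. g p" "\<lambda>_. -1" "\<lambda>_. 1" "real (card S) * w"
  proof unfold_locales
    show "finite S" by fact
    show "prob_space.indep_vars (measure_pmf (Pi_pmf I 0 P)) (\<lambda>_. borel) (\<lambda>p g. g p) S"
      using indep_Pi_borel[OF fI SI, of 0 P "\<lambda>p x. x"] by simp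
    fix i assume i: "i \<in> S"
    show "AE x in measure_pmf (Pi_pmf I 0 P). x i \<in> {- 1..1}"
    proof (rule AE_pmfI)
      fix g assume "g \<in> set_pmf (Pi_pmf I 0 P)"
      then have "g i \<in> set_pmf (P i)" by (rule Pi_set[OF fI]) (use i SI in auto)
      then show "g i \<in> {-1..1}" using set_coord[of w] PS[OF i] by auto
    qed
  next
    show "real (card S) * w \<equiv> (\<Sum>i\<in>S. measure_pmf.expectation (Pi_pmf I 0 P) (\<lambda>g. g i))"
      using ex by simp
  qed
  have "(\<Sum>i\<in>S. (1 - (-1::real))^2) > 0" using fS ne by (simp add: card_gt_0_iff)
  from H.Hoeffding_ineq_abs_ge[OF e this]
  have "measure_pmf.prob (Pi_pmf I 0 P) {g. eps \<le> \<bar>(\<Sum>p\<in>S. g p) - real (card S) * w\<bar>}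
     \<le> 2 * exp (- 2 * eps\<^sup>2 / (\<Sum>i\<in>S. (1 - (-1::real))^2))" by simp
  also have "- 2 * eps\<^sup>2 / (\<Sum>i\<in>S. (1 - (-1::real))^2) = - (eps^2) / (2 * real (card S))"
    by simp
  finally show ?thesis .
qed

lemma exp_pair:
  fixes F :: "'a \<times> 'b \<Rightarrow> real"
  assumes fp: "finite (set_pmf p)" and fq: "finite (set_pmf q)"
  shows "measure_pmf.expectation (pair_pmf p q) F
       = measure_pmf.expectation p (\<lambda>a. measure_pmf.expectation q (\<lambda>b. F (a,b)))"
proof -
  have "measure_pmf.expectation (pair_pmf p q) F = (\<Sum>x\<in>set_pmf p \<times> set_pmf q. pmf (pair_pmf p q) x *\<^sub>R F x)"
    by (rule integral_measure_pmf) (use fp fq in auto)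
  also have "\<dots> = (\<Sum>a\<in>set_pmf p. \<Sum>b\<in>set_pmf q. pmf p a * (pmf q b * F (a,b)))"
    by (simp add: sum.cartesian_product) (intro sum.cong refl, auto simp: pmf_pair mult.assoc)
  also have "\<dots> = (\<Sum>a\<in>set_pmf p. pmf p a *\<^sub>R measure_pmf.expectation q (\<lambda>b. F (a,b)))"
  proof (intro sum.cong refl)
    fix a
    have "measure_pmf.expectation q (\<lambda>b. F (a,b)) = (\<Sum>b\<in>set_pmf q. pmf q b *\<^sub>R F (a,b))"
      by (rule integral_measure_pmf) (use fq in auto)
    then show "(\<Sum>b\<in>set_pmf q. pmf p a * (pmf q b * F (a,b))) = pmf p a *\<^sub>R measure_pmf.expectation q (\<lambda>b. F (a,b))"
      by (simp add: sum_distrib_left)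
  qed
  also have "\<dots> = measure_pmf.expectation p (\<lambda>a. measure_pmf.expectation q (\<lambda>b. F (a,b)))"
    by (rule integral_measure_pmf[symmetric]) (use fp in auto)
  finally show ?thesis .
qed

lemma tail_ineq:
  fixes N x :: real
  assumes N: "N \<ge> 2" and x: "x > 18 * ln N"
  shows "x * (2 * N * exp (- x / 8)) \<le> 18 * ln N"
proof -
  have L: "ln N \<ge> 2/3" using ln2_ge_two_thirds ln_le_cancel_iff[of 2 N] N by linarith
  have xpos: "x > 0" using L x by linarith
  have e1: "exp (1::real) \<ge> 12/5"
  proof -
    have "exp (1::real) = exp (1/4) ^ 4" by (simp flip: exp_of_nat_mult)
    moreover have "exp (1/4::real) \<ge> 5/4" using exp_ge_add_one_self[of "1/4::real"] by simp
    ultimately have "exp (1::real) \<ge> (5/4)^4" by (metis power_mono le_numeral_extra(1) order_trans zero_le_divide_iff zero_le_numeral)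
    then show ?thesis by (simp add: power_divide)
  qed
  define y where "y = 5 * x / 72"
  have ey: "exp y \<ge> x / 6"
  proof -
    have "exp y = exp 1 * exp (y - 1)" by (simp flip: exp_add)
    also have "\<dots> \<ge> 12/5 * y"
    proof -
      have "y > 0" using xpos y_def by simp
      moreover have "y \<le> exp (y - 1)" using exp_ge_add_one_self[of "y - 1"] by simp
      ultimately show ?thesis using e1 by (intro mult_mono) auto
    qed
    finally show ?thesis unfolding y_def by simp
  qed
  have eN: "exp (x / 18) \<ge> N"
  proof -
    have "exp (ln N) \<le> exp (x / 18)" using x by simp
    then show ?thesis using N by simp
  qed
  have "exp (x / 8) = exp (x / 18) * exp y" unfolding y_def by (simp flip: exp_add)
  also have "\<dots> \<ge> N * (x / 6)" using eN ey N xpos by (intro mult_mono) auto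
  finally have big: "exp (x/8) \<ge> N * (x / 6)" .
  have "x * (2 * N * exp (- x / 8)) = 2 * N * x / exp (x / 8)" by (simp add: exp_minus field_simps)
  also have "\<dots> \<le> 2 * N * x / (N * (x / 6))"
    using big N xpos by (intro divide_left_mono) auto
  also have "\<dots> = 12" using N xpos by (simp add: field_simps)
  finally show ?thesis using L by linarith
qed

lemma mean_sq:
  fixes P :: "'i \<Rightarrow> real pmf"
  assumes fI: "finite I" and SI: "S \<subseteq> I" and cS: "card S = n" and n: "n > 0"
    and PS: "\<And>p. p \<in> S \<Longrightarrow> P p = coord_pmf w" and w: "\<bar>w\<bar> \<le> 1"
    and fs: "finite (set_pmf (Pi_pmf I 0 P))"
  shows "measure_pmf.expectation (Pi_pmf I 0 P) (\<lambda>g. ((1 / real n) * (\<Sum>p\<in>S. g p) - w)^2) \<le> 1 / real n"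
proof -
  let ?M = "Pi_pmf I 0 P"
  have fS: "finite S" using fI SI finite_subset by blast
  have ex: "measure_pmf.expectation ?M (\<lambda>g. g p) = w" if "p \<in> S" for p
  proof -
    have "measure_pmf.expectation ?M (\<lambda>g. g p) = measure_pmf.expectation (P p) (\<lambda>x. x)"
      by (rule Pi_comp) (use fI SI that in auto)
    then show ?thesis using PS[OF that] exp_coord_id[OF w] by simp
  qed
  have ex2: "measure_pmf.expectation ?M (\<lambda>g. (g p - w)^2) = 1 - w^2" if "p \<in> S" for p
  proof -
    have "measure_pmf.expectation ?M (\<lambda>g. (g p - w)^2) = measure_pmf.expectation (P p) (\<lambda>x. (x - w)^2)"
      by (rule Pi_comp) (use fI SI that in auto)
    then show ?thesis using PS[OF that] exp_coord_sq[OF w] by simp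
  qed
  have eq: "((1 / real n) * (\<Sum>p\<in>S. g p) - w)^2 = (1 / real n)^2 * (\<Sum>p\<in>S. (g p - w))^2" for g :: "'i \<Rightarrow> real"
  proof -
    have "(\<Sum>p\<in>S. (g p - w)) = (\<Sum>p\<in>S. g p) - real n * w" using cS by (simp add: sum_subtractf)
    then have "(1 / real n) * (\<Sum>p\<in>S. (g p - w)) = (1 / real n) * (\<Sum>p\<in>S. g p) - w" using n by (simp add: field_simps)
    then show ?thesis by (simp add: power_mult_distrib[symmetric])
  qed
  have "measure_pmf.expectation ?M (\<lambda>g. ((1 / real n) * (\<Sum>p\<in>S. g p) - w)^2)
      = (1 / real n)^2 * measure_pmf.expectation ?M (\<lambda>g. (\<Sum>p\<in>S. (g p - w))^2)"
    by (simp only: eq Bochner_Integration.integral_mult_right_zero)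
  also have "measure_pmf.expectation ?M (\<lambda>g. (\<Sum>p\<in>S. (g p - w))^2) = (\<Sum>p\<in>S. measure_pmf.expectation ?M (\<lambda>g. (g p - w)^2))"
    by (rule var_sum[OF fI SI fs, of "\<lambda>_. w"]) (use ex in auto)
  also have "\<dots> = real n * (1 - w^2)" using ex2 cS by simp
  also have "(1 / real n)^2 * (real n * (1 - w^2)) \<le> (1 / real n)^2 * real n"
    using n by (intro mult_left_mono) auto
  also have "\<dots> = 1 / real n" using n by (simp add: power2_eq_square)
  finally show ?thesis .
qed



definition Xh :: "nat \<Rightarrow> nat \<Rightarrow> (nat \<times> nat \<Rightarrow> real) \<Rightarrow> nat \<Rightarrow> real" where
  "Xh s m f k = (\<Sum>t\<in>{k * m ..< (k+1) * m}. f (t, k * s))"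

definition kst :: "nat \<Rightarrow> nat \<Rightarrow> nat \<Rightarrow> (nat \<times> nat \<Rightarrow> real) \<Rightarrow> nat" where
  "kst N s m f = (LEAST k. k < N \<and> (\<forall>k'<N. \<bar>Xh s m f k'\<bar> \<le> \<bar>Xh s m f k\<bar>))"

lemma kst_prop:
  assumes "N \<ge> 1"
  shows "kst N s m f < N \<and> (\<forall>k'<N. \<bar>Xh s m f k'\<bar> \<le> \<bar>Xh s m f (kst N s m f)\<bar>)"
proof -
  let ?F = "(\<lambda>k. \<bar>Xh s m f k\<bar>) ` {..<N}"
  have "0 \<in> {..<N}" using assms by auto
  then have ne: "?F \<noteq> {}" "finite ?F" by blast+
  then have "Max ?F \<in> ?F" by (rule Max_in[rotated])
  then obtain k where k: "k < N" "\<bar>Xh s m f k\<bar> = Max ?F" by auto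
  have "\<forall>k'<N. \<bar>Xh s m f k'\<bar> \<le> \<bar>Xh s m f k\<bar>" using k ne by auto
  with k(1) show ?thesis unfolding kst_def by (rule LeastI[where k = k, OF conjI])
qed

lemma blk_disj:
  assumes "s \<ge> 1" "k * s \<in> blk s k0" shows "k = k0"
proof -
  have "k0 * s \<le> k * s" "k * s < (k0+1) * s" using assms(2) unfolding blk_def by auto
  then have "k0 \<le> k" using assms(1) mult_le_cancel2 by auto
  moreover have "k < k0 + 1" using \<open>k * s < (k0+1) * s\<close> mult_less_cancel2[of k s "k0+1"] by blast
  ultimately have "k0 \<le> k" "k < k0 + 1" by auto
  then show ?thesis by simp
qed

theorem theorem13:
  fixes d s T :: nat and v :: "nat \<Rightarrow> real"
    and q :: "nat \<Rightarrow> (nat \<times> nat \<Rightarrow> real) \<Rightarrow> nat \<Rightarrow> real"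
  assumes "1 \<le> s" and "s \<le> d" and "s dvd d"
    and "T > 0" and "2 dvd T" and "2 * d dvd T * s" and "2 * s dvd T"
    and "block_sparse d s v"
    and "\<And>t Z j. j < d \<Longrightarrow> q t Z j \<in> {-1..1}"
  shows "measure_pmf.expectation (sample_pmf d T v) (\<lambda>Z. fobj d v (Yhat d s T q Z))
           \<le> (36 * real d * ln (real d / real s) + 2 * (real s)^2) / real T"
proof -
  note s1 = assms(1)
  define N where "N = d div s"
  define m where "m = T * s div (2 * d)"
  define n where "n = T div (2 * s)"
  define h where "h = T div 2"
  have dN: "d = N * s" using assms(3) unfolding N_def by simp
  have Th: "T = 2 * h" using assms(5) unfolding h_def by simp
  have hn: "h = s * n" using assms(7) Th unfolding n_def by auto
  have Tm: "T * s = 2 * d * m" using assms(6) unfolding m_def by simp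
  have "2 * h * s = 2 * (N * m) * s" using Tm Th dN by (simp add: algebra_simps)
  then have hm: "h = N * m" using s1 by simp
  have hpos: "h > 0" using Th assms(4) by simp
  have N1: "N \<ge> 1" using hm hpos by (cases N) auto
  have m1: "m \<ge> 1" using hm hpos by (cases m) auto
  have n1: "n \<ge> 1" using hn hpos by (cases n) auto
  obtain k0 c where k0': "k0 < d div s" and c: "0 \<le> c" "c \<le> 1"
    and vv: "\<forall>i. (i \<in> blk s k0 \<longrightarrow> \<bar>v i\<bar> = c) \<and> (i \<notin> blk s k0 \<longrightarrow> v i = 0)"
    using assms(8) unfolding block_sparse_def by (elim exE conjE) (rule that)
  have k0: "k0 < N" using k0' N_def by simp
  have vb: "\<And>i. i \<in> blk s k0 \<Longrightarrow> \<bar>v i\<bar> = c" and vz: "\<And>i. i \<notin> blk s k0 \<Longrightarrow> v i = 0"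
    using vv by auto
  have v1: "\<bar>v i\<bar> \<le> 1" for i using vb vz c by (cases "i \<in> blk s k0") auto
  define P :: "nat \<times> nat \<Rightarrow> real pmf" where "P = (\<lambda>(t,i). coord_pmf (v i))"
  define A where "A = {..<h} \<times> {..<d}"
  define B where "B = {h..<T} \<times> {..<d}"
  define PA where "PA = Pi_pmf A 0 P"
  define PB where "PB = Pi_pmf B 0 P"
  define mg :: "(nat \<times> nat \<Rightarrow> real) \<times> (nat \<times> nat \<Rightarrow> real) \<Rightarrow> nat \<times> nat \<Rightarrow> real"
    where "mg = (\<lambda>(f,g) x. if x \<in> A then f x else g x)"
  define Hf where "Hf k g = (\<Sum>j<d. ((if j \<in> blk s k then (2 * real s / real T) *
         (\<Sum>t\<in>{(h + (j - k * s) * n) ..< (h + (j - k * s + 1) * n)}. g (t, j)) else 0) - v j)^2)" for k g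
  have fA: "finite A" and fB: "finite B" unfolding A_def B_def by auto
  have finA: "finite (set_pmf PA)" unfolding PA_def P_def by (rule fin_coordPi[OF fA])
  have finB: "finite (set_pmf PB)" unfolding PB_def P_def by (rule fin_coordPi[OF fB])
  have U: "{..<T} \<times> {..<d} = A \<union> B" unfolding A_def B_def using Th by auto
  have disj: "A \<inter> B = {}" unfolding A_def B_def by auto
  have samp: "sample_pmf d T v = map_pmf mg (pair_pmf PA PB)"
  proof -
    have "sample_pmf d T v = Pi_pmf (A \<union> B) 0 P" unfolding sample_pmf_def P_def U ..
    also have "\<dots> = map_pmf mg (pair_pmf PA PB)" unfolding PA_def PB_def mg_def
      by (rule Pi_pmf_union[OF fA fB disj])
    finally show ?thesis .
  qed
  have key: "fobj d v (Yhat d s T q (mg (f,g))) = Hf (kst N s m f) g" for f g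
  proof -
    have Xe: "Xhat d s T q (mg (f,g)) k = Xh s m f k" if k: "k < N" for k
      unfolding Xhat_def Xh_def Let_def m_def[symmetric]
    proof (intro sum.cong refl)
      fix t assume t: "t \<in> {k * m..<(k + 1) * m}"
      have "(k+1) * m \<le> N * m" using k by (intro mult_right_mono) auto
      then have "t < h" using t hm by auto
      moreover have "k * s < d" using k dN s1 by simp
      ultimately show "rec_val q (mg (f, g)) t (k * s) = f (t, k * s)"
        by (simp add: mg_def A_def)
    qed
    have "(\<lambda>k. k < d div s \<and> (\<forall>k'<d div s. \<bar>Xhat d s T q (mg (f,g)) k'\<bar> \<le> \<bar>Xhat d s T q (mg (f,g)) k\<bar>))
        = (\<lambda>k. k < N \<and> (\<forall>k'<N. \<bar>Xh s m f k'\<bar> \<le> \<bar>Xh s m f k\<bar>))"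
      unfolding N_def[symmetric] by (intro ext) (auto simp: Xe)
    then have ke: "kstar d s T q (mg (f,g)) = kst N s m f"
      unfolding kstar_def kst_def by simp
    have Ye: "Yhat d s T q (mg (f,g)) j = (if j \<in> blk s (kst N s m f) then (2 * real s / real T) *
         (\<Sum>t\<in>{(h + (j - kst N s m f * s) * n) ..< (h + (j - kst N s m f * s + 1) * n)}. g (t, j)) else 0)" for j
      unfolding Yhat_def Let_def ke n_def[symmetric] h_def[symmetric]
      by (auto intro!: sum.cong simp: mg_def A_def)
    show ?thesis unfolding fobj_def Hf_def Ye ..
  qed
  have Bbound: "measure_pmf.expectation PB (Hf k) \<le> 2 * (real s)^2 / real T + real s * c^2 * of_bool (k \<noteq> k0)"
    if kN: "k < N" for k
  proof -
    define tm where "tm j g = ((if j \<in> blk s k then (2 * real s / real T) *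
         (\<Sum>t\<in>{(h + (j - k * s) * n) ..< (h + (j - k * s + 1) * n)}. g (t, j)) else 0) - v j)^2" for j g
    have intB: "integrable (measure_pmf PB) F" for F :: "_ \<Rightarrow> real"
      by (rule integrable_measure_pmf_finite[OF finB])
    have blkd: "blk s k \<subseteq> {..<d}"
    proof
      fix j assume "j \<in> blk s k"
      then have "j < (k+1) * s" by (simp add: blk_def)
      also have "(k+1) * s \<le> N * s" using kN by (intro mult_right_mono) auto
      finally show "j \<in> {..<d}" using dN by simp
    qed
    have cblk: "card (blk s k') = s" for k' by (simp add: blk_def)
    have "measure_pmf.expectation PB (Hf k) = (\<Sum>j<d. measure_pmf.expectation PB (tm j))"
      unfolding Hf_def tm_def by (rule Bochner_Integration.integral_sum) (rule intB)
    also have "\<dots> = (\<Sum>j\<in>{..<d} - blk s k. measure_pmf.expectation PB (tm j)) + (\<Sum>j\<in>blk s k. measure_pmf.expectation PB (tm j))"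
      by (rule sum.subset_diff[OF blkd]) simp
    also have "(\<Sum>j\<in>blk s k. measure_pmf.expectation PB (tm j)) \<le> (\<Sum>j\<in>blk s k. 2 * real s / real T)"
    proof (rule sum_mono)
      fix j assume j: "j \<in> blk s k"
      define r where "r = j - k * s"
      have rs: "r < s" and jd: "j < d" using j blkd unfolding r_def blk_def by auto
      define S where "S = (\<lambda>t. (t, j)) ` {(h + r * n) ..< (h + (r + 1) * n)}"
      have inj: "inj_on (\<lambda>t. (t, j)) X" for X by (auto simp: inj_on_def)
      have cS: "card S = n" unfolding S_def by (simp add: card_image[OF inj])
      have "h + (r + 1) * n \<le> h + s * n" using rs by (intro add_left_mono mult_right_mono) auto
      then have SB: "S \<subseteq> B" unfolding S_def B_def using jd Th hn by auto
      have sn: "2 * real s / real T = 1 / real n" using Th hn n1 s1 by (simp add: field_simps)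
      have "tm j g = ((1 / real n) * (\<Sum>p\<in>S. g p) - v j)^2" for g
        unfolding tm_def S_def r_def[symmetric] using j sn by (simp add: sum.reindex[OF inj])
      then have "measure_pmf.expectation PB (tm j) = measure_pmf.expectation PB (\<lambda>g. ((1 / real n) * (\<Sum>p\<in>S. g p) - v j)^2)"
        by presburger
      also have "\<dots> \<le> 1 / real n" unfolding PB_def
        by (rule mean_sq[OF fB SB cS _ _ v1]) (use n1 finB in \<open>auto simp: S_def P_def PB_def\<close>)
      finally show "measure_pmf.expectation PB (tm j) \<le> 2 * real s / real T" using sn by simp
    qed
    also have "(\<Sum>j\<in>blk s k. 2 * real s / real T) = 2 * (real s)^2 / real T"
      using cblk by (simp add: power2_eq_square)
    also have "(\<Sum>j\<in>{..<d} - blk s k. measure_pmf.expectation PB (tm j)) = (\<Sum>j\<in>{..<d} - blk s k. (v j)^2)"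
    proof (intro sum.cong refl)
      fix j assume "j \<in> {..<d} - blk s k"
      then have "tm j = (\<lambda>_. (v j)^2)" by (auto simp: tm_def fun_eq_iff)
      then show "measure_pmf.expectation PB (tm j) = (v j)^2" by (simp add: measure_pmf.prob_space)
    qed
    also have "(\<Sum>j\<in>{..<d} - blk s k. (v j)^2) \<le> real s * c^2 * of_bool (k \<noteq> k0)"
    proof (cases "k = k0")
      case True
      then show ?thesis using vz by simp
    next
      case False
      have "(\<Sum>j\<in>{..<d} - blk s k. (v j)^2) \<le> (\<Sum>j\<in>{..<d}. (v j)^2)"
        by (intro sum_mono2) auto
      also have "\<dots> = (\<Sum>j\<in>blk s k0. (v j)^2)"
      proof (rule sum.mono_neutral_right)
        show "blk s k0 \<subseteq> {..<d}"
        proof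
          fix j assume "j \<in> blk s k0"
          then have "j < (k0+1) * s" by (simp add: blk_def)
          also have "(k0+1) * s \<le> N * s" using k0 by (intro mult_right_mono) auto
          finally show "j \<in> {..<d}" using dN by simp
        qed
      qed (use vz in auto)
      also have "\<dots> = (\<Sum>j\<in>blk s k0. c^2)"
        by (intro sum.cong refl) (metis power2_abs vb)
      also have "\<dots> = real s * c^2" using cblk by simp
      finally show ?thesis using False by simp
    qed
    finally show ?thesis by simp
  qed
  have wrong: "real s * c^2 * measure_pmf.prob PA {f. kst N s m f \<noteq> k0} \<le> 36 * real d * ln (real d / real s) / real T"
  proof -
    define W where "W = {f. kst N s m f \<noteq> k0}"
    have dsN: "real d / real s = real N" using dN s1 by simp
    have rT: "real T = 2 * real N * real m" using Th hm by simp
    have rd: "real d = real N * real s" using dN by simp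
    have RHS: "36 * real d * ln (real d / real s) / real T = real s * (18 * ln (real N) / real m)"
      unfolding dsN rT rd using N1 m1 by (simp add: field_simps)
    have pr1: "measure_pmf.prob PA W \<le> 1" by simp
    show ?thesis
    proof (cases "N = 1")
      case True
      then have "W = {}" unfolding W_def using kst_prop[OF N1] k0 by auto
      then show ?thesis unfolding RHS W_def[symmetric] by (simp add: True)
    next
      case False
      then have N2: "real N \<ge> 2" using N1 by simp
      define x where "x = c^2 * real m"
      have mpos: "real m > 0" using m1 by simp
      have main: "c^2 * measure_pmf.prob PA W \<le> 18 * ln (real N) / real m"
      proof (cases "x \<le> 18 * ln (real N)")
        case True
        have "c^2 * measure_pmf.prob PA W \<le> c^2 * 1" using pr1 by (intro mult_left_mono) auto
        also have "\<dots> = x / real m" using mpos by (simp add: x_def)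
        also have "\<dots> \<le> 18 * ln (real N) / real m" using True mpos by (simp add: divide_right_mono)
        finally show ?thesis .
      next
        case False
        have pW: "measure_pmf.prob PA W \<le> 2 * real N * exp (- x / 8)"
        proof -
          define E where "E k = {f. c * real m / 2 \<le> \<bar>Xh s m f k - real m * v (k * s)\<bar>}" for k
          have ks_in: "k * s \<in> blk s k" for k using s1 by (simp add: blk_def)
          have sub: "W \<subseteq> (\<Union>k\<in>{..<N}. E k)"
          proof
            fix f assume "f \<in> W"
            then have k1: "kst N s m f \<noteq> k0" unfolding W_def by simp
            define k1 where "k1 = kst N s m f"
            have k1N: "k1 < N" and k1max: "\<bar>Xh s m f k0\<bar> \<le> \<bar>Xh s m f k1\<bar>"
              using kst_prop[OF N1, of s m f] k0 unfolding k1_def by auto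
            show "f \<in> (\<Union>k\<in>{..<N}. E k)"
            proof (cases "\<bar>Xh s m f k0\<bar> \<le> c * real m / 2")
              case True
              have "\<bar>v (k0 * s)\<bar> = c" using vb ks_in by blast
              then have amu: "\<bar>real m * v (k0 * s)\<bar> = 2 * (c * real m / 2)" by (simp add: abs_mult)
              have aux: "\<And>a b e::real. \<bar>a\<bar> \<le> e \<Longrightarrow> \<bar>b\<bar> = 2 * e \<Longrightarrow> e \<le> \<bar>a - b\<bar>" by arith
              have "c * real m / 2 \<le> \<bar>Xh s m f k0 - real m * v (k0 * s)\<bar>"
                by (rule aux[OF True amu])
              then show ?thesis using k0 unfolding E_def by blast
            next
              case False
              have "k1 * s \<notin> blk s k0" using blk_disj[OF s1] k1 unfolding k1_def by blast
              then have "v (k1 * s) = 0" by (rule vz)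
              then have "c * real m / 2 \<le> \<bar>Xh s m f k1 - real m * v (k1 * s)\<bar>"
                using False k1max by simp
              then show ?thesis using k1N unfolding E_def by blast
            qed
          qed
          have pE: "measure_pmf.prob PA (E k) \<le> 2 * exp (- x / 8)" if k: "k < N" for k
          proof -
            define S where "S = (\<lambda>t. (t, k * s)) ` {k * m ..< (k+1) * m}"
            have inj: "inj_on (\<lambda>t. (t, k * s)) X" for X by (auto simp: inj_on_def)
            have cS: "card S = m" unfolding S_def by (simp add: card_image[OF inj])
            have "(k+1) * m \<le> N * m" using k by (intro mult_right_mono) auto
            moreover have "k * s < d" using k dN s1 by simp
            ultimately have SA: "S \<subseteq> A" unfolding S_def A_def using hm by auto
            have Sne: "S \<noteq> {}" using cS m1 by auto
            have sumS: "(\<Sum>p\<in>S. g p) = Xh s m g k" for g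
              unfolding S_def Xh_def by (simp add: sum.reindex[OF inj])
            have "measure_pmf.prob PA {g. c * real m / 2 \<le> \<bar>(\<Sum>p\<in>S. g p) - real (card S) * v (k * s)\<bar>}
                  \<le> 2 * exp (- ((c * real m / 2)^2) / (2 * real (card S)))"
              unfolding PA_def
              by (rule hoeff[OF fA SA Sne _ v1]) (use c mpos in \<open>auto simp: S_def P_def\<close>)
            also have "- ((c * real m / 2)^2) / (2 * real (card S)) = - x / 8"
              unfolding cS x_def using mpos by (simp add: field_simps power2_eq_square)
            finally show ?thesis unfolding sumS cS E_def .
          qed
          have "measure_pmf.prob PA W \<le> measure_pmf.prob PA (\<Union>k\<in>{..<N}. E k)"
            using sub by (intro measure_pmf.finite_measure_mono) auto
          also have "\<dots> \<le> (\<Sum>k<N. measure_pmf.prob PA (E k))"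
            by (rule measure_pmf.finite_measure_subadditive_finite) auto
          also have "\<dots> \<le> (\<Sum>k<N. 2 * exp (- x / 8))"
            by (intro sum_mono pE) auto
          also have "\<dots> = 2 * real N * exp (- x / 8)" by simp
          finally show ?thesis .
        qed
        have "c^2 * measure_pmf.prob PA W \<le> c^2 * (2 * real N * exp (- x / 8))"
          using pW by (intro mult_left_mono) auto
        also have "\<dots> = x * (2 * real N * exp (- x / 8)) / real m" using mpos by (simp add: x_def)
        also have "\<dots> \<le> 18 * ln (real N) / real m"
          using tail_ineq[OF N2, of x] False mpos by (intro divide_right_mono) auto
        finally show ?thesis .
      qed
      show ?thesis unfolding RHS W_def[symmetric]
        using mult_left_mono[OF main, of "real s"] by (simp add: mult.assoc)
    qed
  qed
  have "measure_pmf.expectation (sample_pmf d T v) (\<lambda>Z. fobj d v (Yhat d s T q Z))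
      = measure_pmf.expectation (pair_pmf PA PB) (\<lambda>x. Hf (kst N s m (fst x)) (snd x))"
  proof -
    have "\<And>x. fobj d v (Yhat d s T q (mg x)) = Hf (kst N s m (fst x)) (snd x)"
      using key by (metis prod.collapse)
    then show ?thesis unfolding samp integral_map_pmf by simp
  qed
  also have "\<dots> = measure_pmf.expectation PA (\<lambda>f. measure_pmf.expectation PB (Hf (kst N s m f)))"
    by (subst exp_pair[OF finA finB]) simp
  also have "\<dots> \<le> measure_pmf.expectation PA (\<lambda>f. 2 * (real s)^2 / real T + real s * c^2 * indicator {f. kst N s m f \<noteq> k0} f)"
  proof (rule integral_mono[OF integrable_measure_pmf_finite[OF finA] integrable_measure_pmf_finite[OF finA]])
    fix f
    have "kst N s m f < N" using kst_prop[OF N1] by blast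
    from Bbound[OF this]
    show "measure_pmf.expectation PB (Hf (kst N s m f)) \<le> 2 * (real s)^2 / real T + real s * c^2 * indicator {f. kst N s m f \<noteq> k0} f"
      by (simp add: indicator_def)
  qed
  also have "\<dots> = 2 * (real s)^2 / real T + real s * c^2 * measure_pmf.prob PA {f. kst N s m f \<noteq> k0}"
    by (simp add: Bochner_Integration.integral_add integrable_measure_pmf_finite[OF finA])
  also have "\<dots> \<le> (36 * real d * ln (real d / real s) + 2 * (real s)^2) / real T"
    using wrong by (simp add: add_divide_distrib)
  finally show ?thesis .
qed

end
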